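(* Let $d\ge1$, $n\in\mathbb{N}$, and fix $s_1\ge0$, $s_2\le0$, $\alpha>0$, $\beta>0$. Let $g\in L^2(\mathbb{T}^d;\mathbb{C})$ with coefficients $\widehat{\mathbf G}=(\hat g_k)_{k\ne0}$ and $g_n\in\mathcal{T}_n$ with coefficients $\widehat{\mathbf G}_n=(\hat g_{n,k})_{k\ne0}$ (zero for $k\notin\mathbb{Z}^d_n$). For $k\ne0$ let $D_k=\alpha\beta|k|^{2(s_2-s_1)}+\alpha+\beta|k|^{2s_2}$ and define $$\mathbf u=\Big(\frac{\alpha\beta|k|^{2(s_2-s_1)}\hat g_k}{D_k}\Big)_{k\ne0},\quad \mathbf v=\Big(\frac{\alpha\hat g_k}{D_k}\Big)_{k\ne0},$$ and $\mathbf u_n,\mathbf v_n$ by the same formulas with $\hat g_{n,k}$ in place of $\hat g_k$ for $k\in\mathbb{Z}^d_n\setminus\{0\}$ and zero for $k\notin\mathbb{Z}^d_n$. (So $(\mathbf u,\mathbf v)$ is the coefficient pair of the minimizer of $I(u,v)=\frac12\|(-\Delta)^{s_1/2}u\|^2+\frac\alpha2\|u+v-g\|^2+\frac\beta2\|R_{s_2/2}(v)\|^2$, and $(\mathbf u_n,\mathbf v_n)$ that of the minimizer of the same functional over $\mathcal{T}_n$ with data $g_n$.) Then $$|\mathbf u-\mathbf u_n|^2_{s_1}+\beta|\mathbf v_n-\mathbf v|^2_{s_2}+\frac\alpha2\|\mathbf u_n+\mathbf v_n-\mathbf u-\mathbf v\|^2_{\ell^2}\le\frac\alpha2\|\widehat{\mathbf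 G}-\widehat{\mathbf G}_n\|^2_{\ell^2}.$$
   Context: $\mathbb{T}^d=\mathbb{R}^d/(2\pi\mathbb{Z})^d$; $\hat u_k=\int_{\mathbb{T}^d}u\,e^{-ik\cdot x}dx$. $\mathbb{Z}^d_n=\{k\in\mathbb{Z}^d:-n/2\le k_i\le n/2-1\ \forall i\}$ and $\mathcal{T}_n$ is the space of trigonometric polynomials $\sum_{k\in\mathbb{Z}^d_n}c_ke^{ik\cdot x}$. $(-\Delta)^\sigma u=(2\pi)^{-d}\sum_k|k|^{2\sigma}\hat u_ke^{ik\cdot x}$, and for $\sigma\le0$, $R_\sigma(u)=(2\pi)^{-d}\sum_{k\ne0}|k|^{2\sigma}\hat u_ke^{ik\cdot x}$. For a sequence $\mathbf w=(w_k)_{k\ne0}$ and $\sigma\in\mathbb{R}$, $|\mathbf w|_\sigma=\big(\sum_{k\ne0}|k|^{2\sigma}|w_k|^2\big)^{1/2}$. *)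

theory Defs
  imports "HOL-Analysis.Analysis"
begin

text \<open>Frequencies k in Z^d are modelled as int ^ 'd, with 'd a finite type (d = CARD('d) >= 1).
  Fourier coefficient sequences are functions int ^ 'd => complex; only k \<noteq> 0 is used.\<close>

definition kabs :: "int ^ 'd::finite \<Rightarrow> real" where
  "kabs k = sqrt (\<Sum>i\<in>UNIV. (real_of_int (k $ i))^2)"

definition Zn :: "nat \<Rightarrow> (int ^ 'd::finite) set" where
  "Zn n = {k. \<forall>i. - real n / 2 \<le> real_of_int (k $ i) \<and> real_of_int (k $ i) \<le> real n / 2 - 1}"

definition wnorm2 :: "real \<Rightarrow> (int ^ 'd::finite \<Rightarrow> complex) \<Rightarrow> ennreal" where
  "wnorm2 \<sigma> w = (\<Sum>\<^sub>\<infinity>k\<in>{k. k \<noteq> 0}. ennreal (kabs k powr (2 * \<sigma>) * (cmod (w k))^2))"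

definition l2norm2 :: "(int ^ 'd::finite \<Rightarrow> complex) \<Rightarrow> ennreal" where
  "l2norm2 w = (\<Sum>\<^sub>\<infinity>k\<in>{k. k \<noteq> 0}. ennreal ((cmod (w k))^2))"

definition Dk :: "real \<Rightarrow> real \<Rightarrow> real \<Rightarrow> real \<Rightarrow> int ^ 'd::finite \<Rightarrow> real" where
  "Dk s1 s2 \<alpha> \<beta> k = \<alpha> * \<beta> * kabs k powr (2 * (s2 - s1)) + \<alpha> + \<beta> * kabs k powr (2 * s2)"

definition ucoef :: "real \<Rightarrow> real \<Rightarrow> real \<Rightarrow> real \<Rightarrow> (int ^ 'd::finite \<Rightarrow> complex) \<Rightarrow> int ^ 'd \<Rightarrow> complex" where
  "ucoef s1 s2 \<alpha> \<beta> G k =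
     complex_of_real (\<alpha> * \<beta> * kabs k powr (2 * (s2 - s1)) / Dk s1 s2 \<alpha> \<beta> k) * G k"

definition vcoef :: "real \<Rightarrow> real \<Rightarrow> real \<Rightarrow> real \<Rightarrow> (int ^ 'd::finite \<Rightarrow> complex) \<Rightarrow> int ^ 'd \<Rightarrow> complex" where
  "vcoef s1 s2 \<alpha> \<beta> G k = complex_of_real (\<alpha> / Dk s1 s2 \<alpha> \<beta> k) * G k"

definition ucoef_n :: "nat \<Rightarrow> real \<Rightarrow> real \<Rightarrow> real \<Rightarrow> real \<Rightarrow> (int ^ 'd::finite \<Rightarrow> complex) \<Rightarrow> int ^ 'd \<Rightarrow> complex" where
  "ucoef_n n s1 s2 \<alpha> \<beta> Gn k = (if k \<in> Zn n then ucoef s1 s2 \<alpha> \<beta> Gn k else 0)"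

definition vcoef_n :: "nat \<Rightarrow> real \<Rightarrow> real \<Rightarrow> real \<Rightarrow> real \<Rightarrow> (int ^ 'd::finite \<Rightarrow> complex) \<Rightarrow> int ^ 'd \<Rightarrow> complex" where
  "vcoef_n n s1 s2 \<alpha> \<beta> Gn k = (if k \<in> Zn n then vcoef s1 s2 \<alpha> \<beta> Gn k else 0)"

end

theory Submission
  imports Defs
begin

lemma aux:
  fixes y r c E :: real
  assumes "0 \<le> y" "0 \<le> r" "c \<le> 1" "0 \<le> E"
  shows "y*r*c*E \<le> y/2*r*(1+c)*E"
proof -
  have "0 \<le> y*r" using assms by simp
  hence "(y*r)*c \<le> (y*r)*((1+c)/2)" using assms(3) by (intro mult_left_mono) auto
  hence "(y*r)*c*E \<le> (y*r)*((1+c)/2)*E" using assms(4) by (intro mult_right_mono)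
  thus ?thesis by (simp add: algebra_simps)
qed

lemma key_real:
  fixes w1 P a b E :: real
  assumes "w1 > 0" "P > 0" "a > 0" "b > 0" "E \<ge> 0"
  defines "D \<equiv> a*b*P + a + b*(w1*P)"
  shows "w1 * ((a*b*P/D)^2 * E) + b * ((w1*P) * ((a/D)^2 * E))
         + a/2 * (((a*b*P + a)/D)^2 * E) \<le> a/2 * E"
proof -
  have D: "D > 0" using assms unfolding D_def by (simp add: add_pos_pos)
  have c1: "(a*b*P + a)/D \<le> 1" using D assms unfolding D_def by (simp add: field_simps)
  have "w1 * ((a*b*P/D)^2 * E) + b * ((w1*P) * ((a/D)^2 * E))
        = (a*b*(w1*P)/D) * ((a*b*P + a)/D) * E"
    using D by (simp add: field_simps power2_eq_square)
  moreover have "a/2 * E - a/2 * (((a*b*P + a)/D)^2 * E)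
        = a/2 * (b*(w1*P)/D) * (1 + (a*b*P + a)/D) * E"
  proof -
    have cr: "(a*b*P + a)/D + b*(w1*P)/D = 1"
    proof -
      have "(a*b*P + a)/D + b*(w1*P)/D = (a*b*P + a + b*(w1*P))/D" by (simp add: add_divide_distrib)
      also have "\<dots> = 1" using D unfolding D_def by simp
      finally show ?thesis .
    qed
    define c where "c = (a*b*P + a)/D"
    have "b*(w1*P)/D = 1 - c" using cr c_def by simp
    then have r: "b*(w1*P)/D = 1 - c" .
    have "a/2 * E - a/2 * (c^2 * E) = a/2 * (1 - c) * (1 + c) * E"
      by (simp add: algebra_simps power2_eq_square)
    then show ?thesis unfolding c_def[symmetric] r .
  qed
  moreover have "(a*b*(w1*P)/D) * ((a*b*P + a)/D) * E \<le> a/2 * (b*(w1*P)/D) * (1 + (a*b*P + a)/D) * E"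
  proof -
    have "0 \<le> b*(w1*P)/D" using assms D by simp
    from aux[OF _ this c1 assms(5), of a] assms(3)
    show ?thesis by (simp add: mult.assoc)
  qed
  ultimately show ?thesis by linarith
qed


lemma kabs_pos:
  fixes k :: "int ^ 'd::finite"
  assumes "k \<noteq> 0"
  shows "kabs k > 0"
proof -
  obtain i where i: "k $ i \<noteq> 0" using assms by (metis vec_eq_iff zero_index)
  have "0 < (real_of_int (k $ i))^2" using i by simp
  also have "\<dots> \<le> (\<Sum>j\<in>UNIV. (real_of_int (k $ j))^2)"
    by (rule member_le_sum) auto
  finally show ?thesis unfolding kabs_def by simp
qed

lemma cmod_scale_sq: "(cmod (complex_of_real c * z))^2 = c^2 * (cmod z)^2"
  by (simp add: norm_mult power_mult_distrib)

lemma pointwise: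
  fixes G Gn :: "int ^ 'd::finite \<Rightarrow> complex"
    and n :: nat and s1 s2 \<alpha> \<beta> :: real and k :: "int ^ 'd"
  assumes "\<alpha> > 0" and "\<beta> > 0" and "k \<noteq> 0"
    and "\<And>k. k \<notin> Zn n \<Longrightarrow> Gn k = 0"
  shows "kabs k powr (2 * s1) * (cmod (ucoef s1 s2 \<alpha> \<beta> G k - ucoef_n n s1 s2 \<alpha> \<beta> Gn k))^2
       + \<beta> * (kabs k powr (2 * s2) * (cmod (vcoef_n n s1 s2 \<alpha> \<beta> Gn k - vcoef s1 s2 \<alpha> \<beta> G k))^2)
       + \<alpha> / 2 * (cmod (ucoef_n n s1 s2 \<alpha> \<beta> Gn k + vcoef_n n s1 s2 \<alpha> \<beta> Gn k
                                      - ucoef s1 s2 \<alpha> \<beta> G k - vcoef s1 s2 \<alpha> \<beta> G k))^2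
       \<le> \<alpha> / 2 * (cmod (G k - Gn k))^2"
proof -
  define x where "x = kabs k"
  have x: "x > 0" using kabs_pos[OF assms(3)] x_def by simp
  define w1 where "w1 = x powr (2 * s1)"
  define P where "P = x powr (2 * (s2 - s1))"
  have w1: "w1 > 0" using x w1_def by simp
  have P: "P > 0" using x P_def by simp
  have w2: "x powr (2 * s2) = w1 * P" unfolding w1_def P_def using x
    by (simp add: powr_add[symmetric] algebra_simps)
  define D where "D = \<alpha>*\<beta>*P + \<alpha> + \<beta>*(w1*P)"
  have Dk: "Dk s1 s2 \<alpha> \<beta> k = D" unfolding Dk_def D_def P_def[symmetric] x_def[symmetric] w2 by simp
  define e where "e = G k - Gn k"
  have un: "ucoef_n n s1 s2 \<alpha> \<beta> Gn k = ucoef s1 s2 \<alpha> \<beta> Gn k"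
    unfolding ucoef_n_def ucoef_def using assms(4)[of k] by auto
  have vn: "vcoef_n n s1 s2 \<alpha> \<beta> Gn k = vcoef s1 s2 \<alpha> \<beta> Gn k"
    unfolding vcoef_n_def vcoef_def using assms(4)[of k] by auto
  have e1: "ucoef s1 s2 \<alpha> \<beta> G k - ucoef_n n s1 s2 \<alpha> \<beta> Gn k = complex_of_real (\<alpha>*\<beta>*P/D) * e"
    unfolding un ucoef_def Dk e_def P_def x_def by (simp only: right_diff_distrib)
  have e2: "vcoef_n n s1 s2 \<alpha> \<beta> Gn k - vcoef s1 s2 \<alpha> \<beta> G k = complex_of_real (- (\<alpha>/D)) * e"
    unfolding vn vcoef_def Dk e_def by (simp only: right_diff_distrib of_real_minus) (simp add: algebra_simps)
  have e3: "ucoef_n n s1 s2 \<alpha> \<beta> Gn k + vcoef_n n s1 s2 \<alpha> \<beta> Gn k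
                                      - ucoef s1 s2 \<alpha> \<beta> G k - vcoef s1 s2 \<alpha> \<beta> G k
          = complex_of_real (- ((\<alpha>*\<beta>*P + \<alpha>)/D)) * e"
  proof -
    have gen: "\<And>a b x y :: complex. a*y + b*y - a*x - b*x = -(a+b)*(x-y)" by (simp add: algebra_simps)
    have c: "complex_of_real (- ((\<alpha>*\<beta>*P + \<alpha>)/D)) = - (complex_of_real (\<alpha>*\<beta>*P/D) + complex_of_real (\<alpha>/D))"
      by (simp add: add_divide_distrib)
    show ?thesis unfolding un vn ucoef_def vcoef_def Dk e_def gen P_def x_def
      by (simp only: c[unfolded P_def x_def])
  qed
  show ?thesis
    unfolding e1 e2 e3 cmod_scale_sq x_def[symmetric] w1_def[symmetric] w2 e_def[symmetric]
    using key_real[OF w1 P assms(1,2), of "(cmod e)^2"] unfolding D_def[symmetric]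
    by simp
qed


lemma infsum_cmult_ennreal:
  fixes f :: "'a \<Rightarrow> ennreal"
  shows "infsum (\<lambda>x. c * f x) A = c * infsum f A"
proof -
  have "infsum (\<lambda>x. c * f x) A = (SUP F\<in>{F. finite F \<and> F\<subseteq>A}. sum (\<lambda>x. c * f x) F)"
    by (rule nonneg_infsum_complete) simp
  also have "\<dots> = (SUP F\<in>{F. finite F \<and> F\<subseteq>A}. c * sum f F)"
    by (simp add: sum_distrib_left)
  also have "\<dots> = c * (SUP F\<in>{F. finite F \<and> F\<subseteq>A}. sum f F)"
    by (rule SUP_mult_left_ennreal[symmetric])
  also have "\<dots> = c * infsum f A"
    by (subst nonneg_infsum_complete[of A f]) simp_all
  finally show ?thesis .
qed

theorem lemma8:
  fixes G Gn :: "int ^ 'd::finite \<Rightarrow> complex"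
    and n :: nat and s1 s2 \<alpha> \<beta> :: real
  assumes "s1 \<ge> 0" and "s2 \<le> 0" and "\<alpha> > 0" and "\<beta> > 0"
    and "(\<lambda>k. (cmod (G k))^2) summable_on {k. k \<noteq> 0}"
    and "\<And>k. k \<notin> Zn n \<Longrightarrow> Gn k = 0"
  shows "wnorm2 s1 (\<lambda>k. ucoef s1 s2 \<alpha> \<beta> G k - ucoef_n n s1 s2 \<alpha> \<beta> Gn k)
       + ennreal \<beta> * wnorm2 s2 (\<lambda>k. vcoef_n n s1 s2 \<alpha> \<beta> Gn k - vcoef s1 s2 \<alpha> \<beta> G k)
       + ennreal (\<alpha> / 2) * l2norm2 (\<lambda>k. ucoef_n n s1 s2 \<alpha> \<beta> Gn k + vcoef_n n s1 s2 \<alpha> \<beta> Gn k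
                                      - ucoef s1 s2 \<alpha> \<beta> G k - vcoef s1 s2 \<alpha> \<beta> G k)
       \<le> ennreal (\<alpha> / 2) * l2norm2 (\<lambda>k. G k - Gn k)"
proof -
  define A where "A = {k :: int ^ 'd. k \<noteq> 0}"
  define T1 where "T1 k = kabs k powr (2 * s1) * (cmod (ucoef s1 s2 \<alpha> \<beta> G k - ucoef_n n s1 s2 \<alpha> \<beta> Gn k))^2" for k
  define T2 where "T2 k = kabs k powr (2 * s2) * (cmod (vcoef_n n s1 s2 \<alpha> \<beta> Gn k - vcoef s1 s2 \<alpha> \<beta> G k))^2" for k
  define T3 where "T3 k = (cmod (ucoef_n n s1 s2 \<alpha> \<beta> Gn k + vcoef_n n s1 s2 \<alpha> \<beta> Gn k
                                      - ucoef s1 s2 \<alpha> \<beta> G k - vcoef s1 s2 \<alpha> \<beta> G k))^2" for k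
  define T4 where "T4 k = (cmod (G k - Gn k))^2" for k
  have L: "wnorm2 s1 (\<lambda>k. ucoef s1 s2 \<alpha> \<beta> G k - ucoef_n n s1 s2 \<alpha> \<beta> Gn k)
       + ennreal \<beta> * wnorm2 s2 (\<lambda>k. vcoef_n n s1 s2 \<alpha> \<beta> Gn k - vcoef s1 s2 \<alpha> \<beta> G k)
       + ennreal (\<alpha> / 2) * l2norm2 (\<lambda>k. ucoef_n n s1 s2 \<alpha> \<beta> Gn k + vcoef_n n s1 s2 \<alpha> \<beta> Gn k
                                      - ucoef s1 s2 \<alpha> \<beta> G k - vcoef s1 s2 \<alpha> \<beta> G k)
     = (\<Sum>\<^sub>\<infinity>k\<in>A. ennreal (T1 k) + ennreal \<beta> * ennreal (T2 k) + ennreal (\<alpha>/2) * ennreal (T3 k))"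
  proof -
    have "(\<Sum>\<^sub>\<infinity>k\<in>A. ennreal (T1 k) + ennreal \<beta> * ennreal (T2 k) + ennreal (\<alpha>/2) * ennreal (T3 k))
      = (\<Sum>\<^sub>\<infinity>k\<in>A. ennreal (T1 k) + ennreal \<beta> * ennreal (T2 k)) + (\<Sum>\<^sub>\<infinity>k\<in>A. ennreal (\<alpha>/2) * ennreal (T3 k))"
      by (intro infsum_add nonneg_summable_on_complete) simp_all
    also have "(\<Sum>\<^sub>\<infinity>k\<in>A. ennreal (T1 k) + ennreal \<beta> * ennreal (T2 k))
      = (\<Sum>\<^sub>\<infinity>k\<in>A. ennreal (T1 k)) + (\<Sum>\<^sub>\<infinity>k\<in>A. ennreal \<beta> * ennreal (T2 k))"
      by (intro infsum_add nonneg_summable_on_complete) simp_all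
    finally show ?thesis
      unfolding wnorm2_def l2norm2_def A_def[symmetric] T1_def[symmetric] T2_def[symmetric] T3_def[symmetric]
      by (simp only: infsum_cmult_ennreal)
  qed
  have R: "ennreal (\<alpha> / 2) * l2norm2 (\<lambda>k. G k - Gn k) = (\<Sum>\<^sub>\<infinity>k\<in>A. ennreal (\<alpha>/2) * ennreal (T4 k))"
    unfolding l2norm2_def A_def[symmetric] T4_def[symmetric]
    by (simp add: infsum_cmult_ennreal)
  have P: "ennreal (T1 k) + ennreal \<beta> * ennreal (T2 k) + ennreal (\<alpha>/2) * ennreal (T3 k)
      \<le> ennreal (\<alpha>/2) * ennreal (T4 k)" if "k \<in> A" for k
  proof -
    have k: "k \<noteq> 0" using that A_def by simp
    have n1: "T1 k \<ge> 0" "T2 k \<ge> 0" "T3 k \<ge> 0" unfolding T1_def T2_def T3_def by auto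
    have "ennreal (T1 k) + ennreal \<beta> * ennreal (T2 k) + ennreal (\<alpha>/2) * ennreal (T3 k)
        = ennreal (T1 k + \<beta> * T2 k + \<alpha>/2 * T3 k)"
      using n1 assms(3,4)
      by (simp only: ennreal_plus[symmetric] ennreal_mult[symmetric] mult_nonneg_nonneg add_nonneg_nonneg
            less_imp_le half_gt_zero order_refl)
    also have "\<dots> \<le> ennreal (\<alpha>/2 * T4 k)"
      using pointwise[OF assms(3,4) k assms(6)] unfolding T1_def T2_def T3_def T4_def
      by (intro ennreal_leI) simp
    also have "\<dots> = ennreal (\<alpha>/2) * ennreal (T4 k)"
      using assms(3) by (intro ennreal_mult) (auto simp: T4_def)
    finally show ?thesis .
  qed
  show ?thesis unfolding L R by (intro infsum_mono P nonneg_summable_on_complete) simp_all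
qed

end
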